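(* Let $b,\sigma:\mathbb{R}^2\to\mathbb{R}$ be locally Lipschitz with $\sigma(x)\neq0$ for all $x$, and let $I^T_x$ and $\mathbb V$ be as in the context. Then: (i) for any $x,y\in\mathbb{R}^2$ and $T>0$ there exists $\psi\in C([0,T];\mathbb{R}^2)$ with $\psi(0)=x$, $\psi(T)=y$ and $I^T_x(\psi)<\infty$; consequently $\mathbb V(x,y)<\infty$ for all $x,y$; (ii) $\mathbb V$ is upper semicontinuous on $\mathbb{R}^2\times\mathbb{R}^2$: for every $(x,y)$, $\lim_{\delta\searrow0}\sup_{(\tilde x,\tilde y)\in B_\delta((x,y))\setminus\{(x,y)\}}\mathbb V(\tilde x,\tilde y)\le\mathbb V(x,y)$; in particular, if $e=(e_1,0)$ is an equilibrium of the deterministic system $\dot y_1=y_2$, $\dot y_2=b(y_1,y_2)$ (i.e. $b(e_1,0)=0$), then $\mathbb V$ is continuous at $(e,e)$; (iii) given $x_0,y_0\in\mathbb{R}^2$ and $\delta,\eta>0$ such that $\mathbb V(x,y_0)<\eta$ for all $x\in\overline B_\delta(x_0)$, there is $T_0\in(0,\infty)$ such that for every $x\in\overline B_\delta(x_0)$ there are $T^x\in(0,T_0]$ and $\psi^x\in C([0,T^x];\mathbb{R}^2)$ with $\psi^x(0)=x$, $\psi^x(T^x)=y_0$ and $I^{T^x}_x(\psi^x)<\eta$.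
   Context: This concerns the stochastic second-order equation $\ddot X_\varepsilon=b(X_\varepsilon,\dot X_\varepsilon)+\sqrt\varepsilon\sigma(X_\varepsilon,\dot X_\varepsilon)\dot B$, i.e. the system $dY^1=Y^2dt$, $dY^2=b(Y^1,Y^2)dt+\sqrt\varepsilon\sigma(Y^1,Y^2)dB$ with scalar Brownian motion $B$. For $x\in\mathbb{R}^2$, $T>0$, and $\psi\in C([0,T];\mathbb{R}^2)$ define $I^T_x(\psi)=\frac12\int_0^T\Big|\frac{\varphi''(s)-b(\varphi(s),\varphi'(s))}{\sigma(\varphi(s),\varphi'(s))}\Big|^2ds$ if $\psi=(\varphi,\varphi')$ with $\varphi\in C^1$, $\varphi'$ absolutely continuous and $\psi(0)=x$, and $I^T_x(\psi)=+\infty$ otherwise. The quasipotential is $\mathbb V(x,y)=\inf\{I^T_x(\psi):\psi(0)=x,\psi(T)=y,T>0\}$. $B_\delta(z)$ is the open ball, $\overline B_\delta(z)$ the closed ball. *)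

theory Defs
  imports "HOL-Analysis.Analysis"
begin

type_synonym R2 = "real \<times> real"

definition loc_lipschitz :: "('a::metric_space \<Rightarrow> 'b::metric_space) \<Rightarrow> bool" where
  "loc_lipschitz f \<longleftrightarrow> (\<forall>z. \<exists>r>0. \<exists>L. L-lipschitz_on (cball z r) f)"

definition abs_cont_on :: "(real \<Rightarrow> real) \<Rightarrow> real set \<Rightarrow> bool" where
  "abs_cont_on f S \<longleftrightarrow>
     (\<forall>\<epsilon>>0. \<exists>\<delta>>0. \<forall>(n::nat) (a::nat \<Rightarrow> real) (b::nat \<Rightarrow> real).
        (\<forall>i<n. a i \<in> S \<and> b i \<in> S \<and> a i \<le> b i \<and> {a i..b i} \<subseteq> S) \<longrightarrow>
        (\<forall>i<n. \<forall>j<n. i \<noteq> j \<longrightarrow> b i \<le> a j \<or> b j \<le> a i) \<longrightarrow>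
        (\<Sum>i<n. b i - a i) < \<delta> \<longrightarrow> (\<Sum>i<n. \<bar>f (b i) - f (a i)\<bar>) < \<epsilon>)"

definition admissible :: "real \<Rightarrow> R2 \<Rightarrow> (real \<Rightarrow> R2) \<Rightarrow> bool" where
  "admissible T x \<psi> \<longleftrightarrow>
     \<psi> 0 = x \<and>
     (\<forall>t\<in>{0..T}. ((\<lambda>s. fst (\<psi> s)) has_real_derivative snd (\<psi> t)) (at t within {0..T})) \<and>
     continuous_on {0..T} (\<lambda>s. snd (\<psi> s)) \<and>
     abs_cont_on (\<lambda>s. snd (\<psi> s)) {0..T}"

text \<open>The action functional I^T_x(\<psi>) (value in [0,\<infinity>]); \<phi>'' is the (a.e. existing) derivative
  of \<phi>' = snd \<circ> \<psi>.\<close>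
definition action :: "(R2 \<Rightarrow> real) \<Rightarrow> (R2 \<Rightarrow> real) \<Rightarrow> real \<Rightarrow> R2 \<Rightarrow> (real \<Rightarrow> R2) \<Rightarrow> ennreal" where
  "action b \<sigma> T x \<psi> =
     (if admissible T x \<psi> then
        (1/2) * (\<integral>\<^sup>+ t\<in>{0..T}. ennreal
           ((\<bar>(deriv (\<lambda>s. snd (\<psi> s)) t - b (\<psi> t)) / \<sigma> (\<psi> t)\<bar>)\<^sup>2) \<partial>lebesgue)
      else \<infinity>)"

definition quasipot :: "(R2 \<Rightarrow> real) \<Rightarrow> (R2 \<Rightarrow> real) \<Rightarrow> R2 \<Rightarrow> R2 \<Rightarrow> ennreal" where
  "quasipot b \<sigma> x y =
     (INF (T, \<psi>) \<in> {(T, \<psi>). T > 0 \<and> continuous_on {0..T} \<psi> \<and> \<psi> 0 = x \<and> \<psi> T = y}.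
        action b \<sigma> T x \<psi>)"

end

theory Submission
  imports Defs
begin


lemma nn_int_add_le:
  assumes le: "\<And>x. f x \<le> g x + h x" and hm: "h \<in> borel_measurable M" and hf: "\<And>x. h x < top"
  shows "integral\<^sup>N M f \<le> integral\<^sup>N M g + integral\<^sup>N M h"
  unfolding nn_integral_def[of M f]
proof (rule SUP_least, safe)
  fix s assume s: "simple_function M s" "s \<le> f"
  have sm: "s \<in> borel_measurable M" using s(1) by (rule borel_measurable_simple_function)
  have dm: "(\<lambda>x. s x - h x) \<in> borel_measurable M" using sm hm by measurable
  have "integral\<^sup>S M s = integral\<^sup>N M s" using s(1) by (simp add: nn_integral_eq_simple_integral)
  also have "\<dots> \<le> (\<integral>\<^sup>+x. (s x - h x) + h x \<partial>M)"
    by (rule nn_integral_mono) (metis add.commute diff_add_self_ennreal le_iff_add order_refl add_diff_self_ennreal le_cases diff_le_self_ennreal)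
  also have "\<dots> = (\<integral>\<^sup>+x. (s x - h x) \<partial>M) + integral\<^sup>N M h"
    using dm hm by (simp add: nn_integral_add)
  also have "(\<integral>\<^sup>+x. (s x - h x) \<partial>M) \<le> integral\<^sup>N M g"
  proof (rule nn_integral_mono)
    fix x have "s x \<le> g x + h x" using s(2) le[of x] by (meson le_funD order_trans)
    then show "s x - h x \<le> g x" using hf[of x] by (auto simp add: ennreal_minus_le_iff add.commute)
  qed
  finally show "integral\<^sup>S M s \<le> integral\<^sup>N M g + integral\<^sup>N M h" by (simp add: add_right_mono)
qed



lemma nn_int_cmult_le:
  fixes a :: real assumes a: "a > 0"
  shows "(\<integral>\<^sup>+x. ennreal a * g x \<partial>M) \<le> ennreal a * integral\<^sup>N M g"
  unfolding nn_integral_def[of M "\<lambda>x. ennreal a * g x"]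
proof (rule SUP_least, safe)
  fix s assume s: "simple_function M s" "s \<le> (\<lambda>x. ennreal a * g x)"
  have sm: "s \<in> borel_measurable M" using s(1) by (rule borel_measurable_simple_function)
  have dm: "(\<lambda>x. ennreal (1/a) * s x) \<in> borel_measurable M" using sm by measurable
  have e: "ennreal a * ennreal (1/a) = 1" using a by (simp add: ennreal_mult[symmetric])
  have "integral\<^sup>S M s = integral\<^sup>N M s" using s(1) by (simp add: nn_integral_eq_simple_integral)
  also have "\<dots> = (\<integral>\<^sup>+x. ennreal a * (ennreal (1/a) * s x) \<partial>M)"
    by (simp add: mult.assoc[symmetric] e)
  also have "\<dots> = ennreal a * (\<integral>\<^sup>+x. ennreal (1/a) * s x \<partial>M)"
    using dm by (simp add: nn_integral_cmult)
  also have "(\<integral>\<^sup>+x. ennreal (1/a) * s x \<partial>M) \<le> integral\<^sup>N M g"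
  proof (rule nn_integral_mono)
    fix x have "s x \<le> ennreal a * g x" using s(2) by (meson le_funD)
    then have "ennreal (1/a) * s x \<le> ennreal (1/a) * (ennreal a * g x)" by (rule mult_left_mono) simp
    also have "\<dots> = g x" by (simp add: mult.assoc[symmetric] e mult.commute[of "ennreal (1/a)"])
    finally show "ennreal (1/a) * s x \<le> g x" .
  qed
  finally show "integral\<^sup>S M s \<le> ennreal a * integral\<^sup>N M g" by (simp add: mult_left_mono)
qed



lemma key_ineq:
  fixes g q b0 b1 s0 s1 \<gamma> :: real
  assumes g0: "0<\<gamma>" "\<gamma>\<le>1" and s1: "s1\<noteq>0" and s0: "s0 \<noteq> 0"
    and hs: "\<bar>s0 - s1\<bar> \<le> \<gamma>/8 * \<bar>s1\<bar>" and hw: "\<bar>q + b0 - b1\<bar> \<le> \<gamma>/8 * \<bar>s1\<bar>"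
  shows "((g + q - b1)/s1)^2 \<le> (1+\<gamma>) * ((g - b0)/s0)^2 + \<gamma>"
proof -
  define c where "c = \<gamma>/8"
  define X where "X = \<bar>(g-b0)/s0\<bar>"
  have c0: "0 < c" "c \<le> 1/8" using g0 by (auto simp: c_def)
  have X0: "X \<ge> 0" by (simp add: X_def)
  have X2: "X^2 = ((g-b0)/s0)^2" unfolding X_def by (rule power2_abs)
  have u: "(g+q-b1)/s1 = (g-b0)/s0 * (s0/s1) + (q+b0-b1)/s1"
    using s0 s1 by (simp add: field_simps)
  have r1: "\<bar>s0/s1\<bar> \<le> 1 + c"
  proof -
    have "\<bar>s0\<bar> \<le> \<bar>s1\<bar> + \<bar>s0 - s1\<bar>" by linarith
    then have "\<bar>s0\<bar> \<le> (1+c) * \<bar>s1\<bar>" using hs by (simp add: c_def algebra_simps)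
    then show ?thesis using s1 by (simp add: divide_le_eq abs_divide)
  qed
  have r2: "\<bar>(q+b0-b1)/s1\<bar> \<le> c" using hw s1 by (simp add: abs_divide divide_le_eq c_def)
  have "\<bar>(g-b0)/s0 * (s0/s1)\<bar> \<le> X * (1+c)"
    unfolding abs_mult X_def by (rule mult_left_mono[OF r1]) simp
  then have ub: "\<bar>(g+q-b1)/s1\<bar> \<le> X*(1+c) + c" unfolding u using r2 by linarith
  have "((g+q-b1)/s1)^2 \<le> (X*(1+c) + c)^2"
    by (metis power2_abs ub abs_ge_zero power_mono)
  also have "\<dots> = X^2*(1+c)^2 + 2*X*c*(1+c) + c^2" by (simp add: power2_eq_square algebra_simps)
  also have "\<dots> \<le> X^2*(1+c)^2 + c*(1+c)*(X^2+1) + c^2"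
  proof -
    have "0 \<le> (X-1)^2" by simp
    then have "2*X \<le> X^2+1" by (simp add: power2_eq_square algebra_simps)
    then have "(2*X)*(c*(1+c)) \<le> (X^2+1)*(c*(1+c))" by (rule mult_right_mono) (use c0 in auto)
    then show ?thesis by (simp add: algebra_simps)
  qed
  also have "\<dots> = X^2 * (1 + 3*c + 2*c^2) + (c + 2*c^2)" by (simp add: power2_eq_square algebra_simps)
  also have "\<dots> \<le> X^2 * (1 + 8*c) + 8*c"
  proof -
    have "c*c \<le> 1*c" using c0 by (intro mult_right_mono) auto
    then have "2*c^2 \<le> 5*c" using c0 by (simp add: power2_eq_square)
    then have k1: "1 + 3*c + 2*c^2 \<le> 1 + 8*c" using c0 by linarith
    have "c + 2*c^2 \<le> 8*c" using c0 \<open>2*c^2 \<le> 5*c\<close> by linarith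
    have "X^2 * (1 + 3*c + 2*c^2) \<le> X^2 * (1 + 8*c)" using k1 by (intro mult_left_mono) auto
    then show ?thesis using \<open>c + 2*c^2 \<le> 8*c\<close> by linarith
  qed
  also have "\<dots> = (1+\<gamma>) * ((g - b0)/s0)^2 + \<gamma>" using X2 by (simp add: c_def)
  finally show ?thesis .
qed



definition cc2 :: "real \<Rightarrow> R2 \<Rightarrow> R2 \<Rightarrow> real" where
  "cc2 T d e = (3*(fst e - fst d - snd d*T) - (snd e - snd d)*T)/T^2"
definition cc3 :: "real \<Rightarrow> R2 \<Rightarrow> R2 \<Rightarrow> real" where
  "cc3 T d e = ((snd e - snd d)*T - 2*(fst e - fst d - snd d*T))/T^3"
definition cub :: "real \<Rightarrow> R2 \<Rightarrow> R2 \<Rightarrow> real \<Rightarrow> real" where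
  "cub T d e t = fst d + snd d * t + cc2 T d e * t^2 + cc3 T d e * t^3"
definition cub1 :: "real \<Rightarrow> R2 \<Rightarrow> R2 \<Rightarrow> real \<Rightarrow> real" where
  "cub1 T d e t = snd d + 2*cc2 T d e*t + 3*cc3 T d e*t^2"
definition cub2 :: "real \<Rightarrow> R2 \<Rightarrow> R2 \<Rightarrow> real \<Rightarrow> real" where
  "cub2 T d e t = 2*cc2 T d e + 6*cc3 T d e*t"

lemma cub_0[simp]: "cub T d e 0 = fst d" and cub1_0[simp]: "cub1 T d e 0 = snd d"
  by (simp_all add: cub_def cub1_def)

lemma cub_T: "T > 0 \<Longrightarrow> cub T d e T = fst e"
  by (simp add: cub_def cc2_def cc3_def field_simps power2_eq_square power3_eq_cube)

lemma cub1_T: "T > 0 \<Longrightarrow> cub1 T d e T = snd e"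
  by (simp add: cub1_def cc2_def cc3_def field_simps power2_eq_square power3_eq_cube)

lemma cub_deriv: "(cub T d e has_real_derivative cub1 T d e t) (at t within S)"
  unfolding cub_def cub1_def
  by (auto intro!: derivative_eq_intros simp: power2_eq_square)

lemma cub1_deriv: "(cub1 T d e has_real_derivative cub2 T d e t) (at t within S)"
  unfolding cub2_def cub1_def
  by (auto intro!: derivative_eq_intros simp: power2_eq_square)

lemma cub1_lip:
  assumes "a \<in> {0..T}" "b \<in> {0..T}"
  shows "\<bar>cub1 T d e b - cub1 T d e a\<bar> \<le> (2*\<bar>cc2 T d e\<bar> + 6*\<bar>cc3 T d e\<bar>*T) * \<bar>b - a\<bar>"
proof -
  have eq: "cub1 T d e b - cub1 T d e a = (b - a) * (2*cc2 T d e + 3*cc3 T d e*(a+b))"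
    by (simp add: cub1_def algebra_simps power2_eq_square)
  have "\<bar>3*cc3 T d e*(a+b)\<bar> \<le> 6*\<bar>cc3 T d e\<bar>*T"
  proof -
    have "\<bar>a+b\<bar> \<le> 2*T" using assms by auto
    then have "\<bar>cc3 T d e\<bar> * \<bar>a+b\<bar> \<le> \<bar>cc3 T d e\<bar> * (2*T)" by (intro mult_left_mono) auto
    then show ?thesis by (simp add: abs_mult mult_ac)
  qed
  then have "\<bar>2*cc2 T d e + 3*cc3 T d e*(a+b)\<bar> \<le> 2*\<bar>cc2 T d e\<bar> + 6*\<bar>cc3 T d e\<bar>*T" by linarith
  then have "\<bar>b - a\<bar> * \<bar>2*cc2 T d e + 3*cc3 T d e*(a+b)\<bar> \<le> \<bar>b - a\<bar> * (2*\<bar>cc2 T d e\<bar> + 6*\<bar>cc3 T d e\<bar>*T)"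
    by (rule mult_left_mono) auto
  also have "\<dots> = (2*\<bar>cc2 T d e\<bar> + 6*\<bar>cc3 T d e\<bar>*T) * \<bar>b - a\<bar>" by (rule mult.commute)
  finally show ?thesis unfolding eq abs_mult .
qed

definition KK :: "real \<Rightarrow> real" where
  "KK T = (let k2 = (6+5*T)/T^2; k3 = (4+4*T)/T^3 in
     (1 + T + k2*T^2 + k3*T^3) + (1 + 2*k2*T + 3*k3*T^2) + (2*k2 + 6*k3*T))"

lemma KK_pos: assumes T: "T > 0" shows "KK T > 0"
proof -
  have a: "(6+5*T)/T^2 > 0" "(4+4*T)/T^3 > 0" using T by simp_all
  have "(6+5*T)/T^2*T^2 \<ge> 0" "(4+4*T)/T^3*T^3 \<ge> 0" "2*((6+5*T)/T^2)*T \<ge> 0" "3*((4+4*T)/T^3)*T^2 \<ge> 0"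
     "6*((4+4*T)/T^3)*T \<ge> 0" using a T by simp_all
  then show ?thesis using a T unfolding KK_def Let_def by linarith
qed



lemma abs_fst_le: "\<bar>fst (p::R2)\<bar> \<le> norm p"
  using norm_fst_le[of "fst p" "snd p"] by simp
lemma abs_snd_le: "\<bar>snd (p::R2)\<bar> \<le> norm p"
  using norm_snd_le[of "snd p" "fst p"] by simp

lemma abs_lin2: "\<bar>(p::real)*A - q*B\<bar> \<le> \<bar>p\<bar>*\<bar>A\<bar> + \<bar>q\<bar>*\<bar>B\<bar>"
  by (metis abs_mult abs_triangle_ineq4)

lemma cc_bounds:
  assumes T: "T > 0" and d: "norm d \<le> r" and e: "norm e \<le> r"
  shows "\<bar>cc2 T d e\<bar> \<le> (6+5*T)/T^2 * r" "\<bar>cc3 T d e\<bar> \<le> (4+4*T)/T^3 * r"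
proof -
  have d1: "\<bar>fst d\<bar> \<le> r" "\<bar>snd d\<bar> \<le> r" using d abs_fst_le[of d] abs_snd_le[of d] by linarith+
  have e1: "\<bar>fst e\<bar> \<le> r" "\<bar>snd e\<bar> \<le> r" using e abs_fst_le[of e] abs_snd_le[of e] by linarith+
  have dT: "\<bar>snd d * T\<bar> \<le> r * T" using d1 T by (simp add: abs_mult mult_right_mono)
  have D: "\<bar>fst e - fst d - snd d*T\<bar> \<le> (2+T)*r"
  proof -
    have "(2+T)*r = r + r + r*T" by (simp add: algebra_simps)
    then show ?thesis using d1 e1 dT unfolding abs_le_iff by linarith
  qed
  have E: "\<bar>snd e - snd d\<bar> \<le> 2*r" using d1 e1 by linarith
  have ET: "\<bar>(snd e - snd d)*T\<bar> \<le> 2*r*T" using E T by (simp add: abs_mult mult_right_mono)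
  have N2: "\<bar>3*(fst e - fst d - snd d*T) - (snd e - snd d)*T\<bar> \<le> (6+5*T)*r"
  proof -
    have "(6+5*T)*r = 3*((2+T)*r) + 2*r*T" by (simp add: algebra_simps)
    then show ?thesis using D ET abs_lin2[of 3 "fst e - fst d - snd d*T" 1 "(snd e - snd d)*T"] by simp
  qed
  have "\<bar>cc2 T d e\<bar> = \<bar>3*(fst e - fst d - snd d*T) - (snd e - snd d)*T\<bar> / T^2"
    by (simp add: cc2_def abs_divide)
  also have "\<dots> \<le> (6+5*T)*r / T^2" by (rule divide_right_mono[OF N2]) simp
  finally show "\<bar>cc2 T d e\<bar> \<le> (6+5*T)/T^2 * r" by simp
  have N3: "\<bar>(snd e - snd d)*T - 2*(fst e - fst d - snd d*T)\<bar> \<le> (4+4*T)*r"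
  proof -
    have "(4+4*T)*r = 2*((2+T)*r) + 2*r*T" by (simp add: algebra_simps)
    then show ?thesis using D ET abs_lin2[of 1 "(snd e - snd d)*T" 2 "fst e - fst d - snd d*T"] by simp
  qed
  have "\<bar>cc3 T d e\<bar> = \<bar>(snd e - snd d)*T - 2*(fst e - fst d - snd d*T)\<bar> / T^3"
    using T by (simp add: cc3_def abs_divide)
  also have "\<dots> \<le> (4+4*T)*r / T^3" by (rule divide_right_mono[OF N3]) (use T in simp)
  finally show "\<bar>cc3 T d e\<bar> \<le> (4+4*T)/T^3 * r" by simp
qed



lemma cub_bounds:
  assumes T: "T > 0" and d: "norm d \<le> r" and e: "norm e \<le> r" and t: "t \<in> {0..T}"
  shows "\<bar>cub T d e t\<bar> \<le> KK T * r" "\<bar>cub1 T d e t\<bar> \<le> KK T * r" "\<bar>cub2 T d e t\<bar> \<le> KK T * r"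
proof -
  define k2 where "k2 = (6+5*T)/T^2"
  define k3 where "k3 = (4+4*T)/T^3"
  have r0: "r \<ge> 0" using d norm_ge_zero order_trans by blast
  have c2: "\<bar>cc2 T d e\<bar> \<le> k2 * r" and c3: "\<bar>cc3 T d e\<bar> \<le> k3 * r"
    using cc_bounds[OF T d e] by (simp_all add: k2_def k3_def)
  have k0: "k2 \<ge> 0" "k3 \<ge> 0" using T by (simp_all add: k2_def k3_def)
  have d1: "\<bar>fst d\<bar> \<le> r" "\<bar>snd d\<bar> \<le> r" using d abs_fst_le[of d] abs_snd_le[of d] by linarith+
  have t0: "0 \<le> t" "t \<le> T" using t by auto
  have tt: "t^2 \<le> T^2" "t^3 \<le> T^3" using t0 by (simp_all add: power_mono)
  have a1: "\<bar>snd d * t\<bar> \<le> r * T" unfolding abs_mult using d1 t0 by (intro mult_mono) auto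
  have a2: "\<bar>cc2 T d e * t^2\<bar> \<le> (k2*r) * T^2" unfolding abs_mult using c2 tt t0 k0 r0 by (intro mult_mono) auto
  have a3: "\<bar>cc3 T d e * t^3\<bar> \<le> (k3*r) * T^3" unfolding abs_mult using c3 tt t0 k0 r0 by (intro mult_mono) auto
  have b2: "\<bar>2*cc2 T d e * t\<bar> \<le> 2*(k2*r) * T" unfolding abs_mult using c2 t0 k0 r0 by (intro mult_mono) auto
  have b3: "\<bar>3*cc3 T d e * t^2\<bar> \<le> 3*(k3*r) * T^2" unfolding abs_mult using c3 tt t0 k0 r0 by (intro mult_mono) auto
  have e3: "\<bar>6*cc3 T d e * t\<bar> \<le> 6*(k3*r) * T" unfolding abs_mult using c3 t0 k0 r0 by (intro mult_mono) auto
  have KKe: "KK T * r = (r + r*T + (k2*r)*T^2 + (k3*r)*T^3) + (r + 2*(k2*r)*T + 3*(k3*r)*T^2) + (2*(k2*r) + 6*(k3*r)*T)"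
    unfolding KK_def Let_def k2_def[symmetric] k3_def[symmetric] by (simp add: algebra_simps)
  have p1: "0 \<le> (k2*r)*T^2" "0 \<le> (k3*r)*T^3" "0 \<le> 2*(k2*r)*T" "0 \<le> 3*(k3*r)*T^2" "0 \<le> 6*(k3*r)*T" "0 \<le> r*T" "0 \<le> k2*r"
    using k0 r0 T by simp_all
  have "\<bar>cub T d e t\<bar> \<le> \<bar>fst d\<bar> + \<bar>snd d * t\<bar> + \<bar>cc2 T d e * t^2\<bar> + \<bar>cc3 T d e * t^3\<bar>"
    unfolding cub_def by linarith
  then show "\<bar>cub T d e t\<bar> \<le> KK T * r" using d1 a1 a2 a3 p1 KKe by linarith
  have "\<bar>cub1 T d e t\<bar> \<le> \<bar>snd d\<bar> + \<bar>2*cc2 T d e * t\<bar> + \<bar>3*cc3 T d e * t^2\<bar>"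
    unfolding cub1_def by linarith
  then show "\<bar>cub1 T d e t\<bar> \<le> KK T * r" using d1 b2 b3 p1 KKe r0 by linarith
  have "\<bar>cub2 T d e t\<bar> \<le> \<bar>2*cc2 T d e\<bar> + \<bar>6*cc3 T d e * t\<bar>"
    unfolding cub2_def by linarith
  then show "\<bar>cub2 T d e t\<bar> \<le> KK T * r" using c2 e3 p1 KKe r0 by linarith
qed



lemma abs_cont_add:
  assumes f: "abs_cont_on f S" and g: "abs_cont_on g S"
  shows "abs_cont_on (\<lambda>s. f s + g s) S"
  unfolding abs_cont_on_def
proof (intro allI impI)
  fix \<epsilon> :: real assume e: "\<epsilon> > 0"
  obtain d1 where d1: "d1 > 0" "\<forall>(n::nat) a b. (\<forall>i<n. a i \<in> S \<and> b i \<in> S \<and> a i \<le> b i \<and> {a i..b i} \<subseteq> S) \<longrightarrow>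
        (\<forall>i<n. \<forall>j<n. i \<noteq> j \<longrightarrow> b i \<le> a j \<or> b j \<le> a i) \<longrightarrow>
        (\<Sum>i<n. b i - a i) < d1 \<longrightarrow> (\<Sum>i<n. \<bar>f (b i) - f (a i)\<bar>) < \<epsilon>/2"
    using f[unfolded abs_cont_on_def, THEN spec[of _ "\<epsilon>/2"], THEN mp, OF half_gt_zero[OF e]] by blast
  obtain d2 where d2: "d2 > 0" "\<forall>(n::nat) a b. (\<forall>i<n. a i \<in> S \<and> b i \<in> S \<and> a i \<le> b i \<and> {a i..b i} \<subseteq> S) \<longrightarrow>
        (\<forall>i<n. \<forall>j<n. i \<noteq> j \<longrightarrow> b i \<le> a j \<or> b j \<le> a i) \<longrightarrow>
        (\<Sum>i<n. b i - a i) < d2 \<longrightarrow> (\<Sum>i<n. \<bar>g (b i) - g (a i)\<bar>) < \<epsilon>/2"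
    using g[unfolded abs_cont_on_def, THEN spec[of _ "\<epsilon>/2"], THEN mp, OF half_gt_zero[OF e]] by blast
  show "\<exists>\<delta>>0. \<forall>(n::nat) a b. (\<forall>i<n. a i \<in> S \<and> b i \<in> S \<and> a i \<le> b i \<and> {a i..b i} \<subseteq> S) \<longrightarrow>
        (\<forall>i<n. \<forall>j<n. i \<noteq> j \<longrightarrow> b i \<le> a j \<or> b j \<le> a i) \<longrightarrow>
        (\<Sum>i<n. b i - a i) < \<delta> \<longrightarrow> (\<Sum>i<n. \<bar>f (b i) + g (b i) - (f (a i) + g (a i))\<bar>) < \<epsilon>"
  proof (intro exI[of _ "min d1 d2"] conjI allI impI)
    show "min d1 d2 > 0" using d1 d2 by simp
    fix n :: nat and a b :: "nat \<Rightarrow> real"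
    assume h1: "\<forall>i<n. a i \<in> S \<and> b i \<in> S \<and> a i \<le> b i \<and> {a i..b i} \<subseteq> S"
      and h2: "\<forall>i<n. \<forall>j<n. i \<noteq> j \<longrightarrow> b i \<le> a j \<or> b j \<le> a i"
      and h3: "(\<Sum>i<n. b i - a i) < min d1 d2"
    have h3a: "(\<Sum>i<n. b i - a i) < d1" and h3b: "(\<Sum>i<n. b i - a i) < d2" using h3 by auto
    have s1: "(\<Sum>i<n. \<bar>f (b i) - f (a i)\<bar>) < \<epsilon>/2" using d1(2)[THEN spec[of _ n], THEN spec[of _ a], THEN spec[of _ b]] h1 h2 h3a h3b by blast
    have s2: "(\<Sum>i<n. \<bar>g (b i) - g (a i)\<bar>) < \<epsilon>/2" using d2(2)[THEN spec[of _ n], THEN spec[of _ a], THEN spec[of _ b]] h1 h2 h3a h3b by blast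
    have "(\<Sum>i<n. \<bar>f (b i) + g (b i) - (f (a i) + g (a i))\<bar>) \<le> (\<Sum>i<n. \<bar>f (b i) - f (a i)\<bar> + \<bar>g (b i) - g (a i)\<bar>)"
      by (rule sum_mono) linarith
    also have "\<dots> = (\<Sum>i<n. \<bar>f (b i) - f (a i)\<bar>) + (\<Sum>i<n. \<bar>g (b i) - g (a i)\<bar>)" by (rule sum.distrib)
    finally show "(\<Sum>i<n. \<bar>f (b i) + g (b i) - (f (a i) + g (a i))\<bar>) < \<epsilon>" using s1 s2 by linarith
  qed
qed

lemma abs_cont_lip:
  assumes L: "L \<ge> 0" and lip: "\<And>a b. a \<in> S \<Longrightarrow> b \<in> S \<Longrightarrow> \<bar>g b - g a\<bar> \<le> L * \<bar>b - a\<bar>"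
  shows "abs_cont_on g S"
  unfolding abs_cont_on_def
proof (intro allI impI)
  fix \<epsilon> :: real assume e: "\<epsilon> > 0"
  show "\<exists>\<delta>>0. \<forall>(n::nat) a b. (\<forall>i<n. a i \<in> S \<and> b i \<in> S \<and> a i \<le> b i \<and> {a i..b i} \<subseteq> S) \<longrightarrow>
        (\<forall>i<n. \<forall>j<n. i \<noteq> j \<longrightarrow> b i \<le> a j \<or> b j \<le> a i) \<longrightarrow>
        (\<Sum>i<n. b i - a i) < \<delta> \<longrightarrow> (\<Sum>i<n. \<bar>g (b i) - g (a i)\<bar>) < \<epsilon>"
  proof (intro exI[of _ "\<epsilon>/(L+1)"] conjI allI impI)
    show "\<epsilon>/(L+1) > 0" using e L by simp
    fix n :: nat and a b :: "nat \<Rightarrow> real"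
    assume h1: "\<forall>i<n. a i \<in> S \<and> b i \<in> S \<and> a i \<le> b i \<and> {a i..b i} \<subseteq> S"
      and h2: "\<forall>i<n. \<forall>j<n. i \<noteq> j \<longrightarrow> b i \<le> a j \<or> b j \<le> a i"
      and h3: "(\<Sum>i<n. b i - a i) < \<epsilon>/(L+1)"
    have "(\<Sum>i<n. \<bar>g (b i) - g (a i)\<bar>) \<le> (\<Sum>i<n. L * (b i - a i))"
    proof (rule sum_mono)
      fix i assume "i \<in> {..<n}"
      then have "a i \<in> S" "b i \<in> S" "a i \<le> b i" using h1 by auto
      then show "\<bar>g (b i) - g (a i)\<bar> \<le> L * (b i - a i)" using lip[of "a i" "b i"] by simp
    qed
    also have "\<dots> = L * (\<Sum>i<n. b i - a i)" by (simp add: sum_distrib_left)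
    also have "\<dots> \<le> L * (\<epsilon>/(L+1))" using h3 L by (intro mult_left_mono) auto
    also have "\<dots> = \<epsilon> * (L/(L+1))" by simp
    also have "\<dots> < \<epsilon> * 1" using L e by (intro mult_strict_left_mono) auto
    finally show "(\<Sum>i<n. \<bar>g (b i) - g (a i)\<bar>) < \<epsilon>" by simp
  qed
qed

lemma deriv_add_smooth:
  assumes g: "(g has_real_derivative g') (at t)"
  shows "deriv (\<lambda>s. f s + g s) t = deriv f t + (if f differentiable (at t) then g' else 0)"
proof (cases "f differentiable (at t)")
  case True
  then have "(f has_real_derivative deriv f t) (at t)" by (simp add: DERIV_deriv_iff_real_differentiable)
  then have "((\<lambda>s. f s + g s) has_real_derivative deriv f t + g') (at t)" using g by (rule DERIV_add)
  then show ?thesis using True by (simp add: DERIV_imp_deriv)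
next
  case False
  have nd: "\<not> (\<lambda>s. f s + g s) differentiable (at t)"
  proof
    assume "(\<lambda>s. f s + g s) differentiable (at t)"
    moreover have "g differentiable (at t)" using g real_differentiable_def by blast
    ultimately have "(\<lambda>s. (f s + g s) - g s) differentiable (at t)" by (rule differentiable_diff)
    then show False using False by simp
  qed
  have "\<And>D. \<not> ((\<lambda>s. f s + g s) has_real_derivative D) (at t)" using nd real_differentiable_def by blast
  moreover have "\<And>D. \<not> (f has_real_derivative D) (at t)" using False real_differentiable_def by blast
  ultimately show ?thesis using False by (simp add: deriv_def)
qed



lemma loc_lip_cont:
  fixes f :: "R2 \<Rightarrow> real"
  assumes "loc_lipschitz f" shows "continuous_on UNIV f"
proof -
  have "isCont f z" for z
  proof -
    obtain r L where r: "r > 0" "L-lipschitz_on (cball z r) f" using assms unfolding loc_lipschitz_def by blast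
    have "continuous_on (cball z r) f" using r(2) by (rule lipschitz_on_continuous_on)
    moreover have "z \<in> interior (cball z r)" using r(1) by simp
    ultimately show ?thesis by (rule continuous_on_interior)
  qed
  then show ?thesis by (simp add: continuous_at_imp_continuous_on)
qed

lemma leb_Icc: "emeasure lebesgue {0..T} = ennreal (if 0 \<le> T then T else 0)"
  by (simp add: emeasure_lborel_Icc_eq)

lemma ind_meas: "(\<lambda>t. ennreal c * indicator {0..T::real} t) \<in> borel_measurable lebesgue"
  by (intro borel_measurable_const borel_measurable_times_ennreal borel_measurable_indicator) simp

lemma int_ind: "(\<integral>\<^sup>+t. ennreal c * indicator {0..T::real} t \<partial>lebesgue) = ennreal c * ennreal (if 0 \<le> T then T else 0)"
  by (simp add: nn_integral_cmult_indicator emeasure_lborel_Icc_eq)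

lemma half_enn: "(1/2::ennreal) * ennreal a = ennreal (a/2)"
  by (smt (verit, del_insts) div_by_1 divide_ennreal_def
    divide_inverse_commute ennreal_1 ennreal_half ennreal_mult'
    inverse_divide inverse_nonnegative_iff_nonnegative)

lemma pert:
  fixes b \<sigma> :: "R2 \<Rightarrow> real" and \<psi> :: "real \<Rightarrow> R2"
  assumes bc: "continuous_on UNIV b" and sc: "continuous_on UNIV \<sigma>" and snz: "\<forall>z. \<sigma> z \<noteq> 0"
    and T: "T > 0" and c\<psi>: "continuous_on {0..T} \<psi>" and adm: "admissible T x \<psi>" and yT: "\<psi> T = y"
    and act: "action b \<sigma> T x \<psi> < ennreal c"
  shows "\<exists>r>0. \<forall>x' y'. dist x' x < r \<longrightarrow> dist y' y < r \<longrightarrow>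
           (\<exists>\<psi>'. continuous_on {0..T} \<psi>' \<and> \<psi>' 0 = x' \<and> \<psi>' T = y' \<and> action b \<sigma> T x' \<psi>' < ennreal c)"
proof -
  define f where "f = (\<lambda>s. snd (\<psi> s))"
  define h where "h = (\<lambda>t. (\<bar>(deriv f t - b (\<psi> t)) / \<sigma> (\<psi> t)\<bar>)\<^sup>2)"
  define I where "I = (\<integral>\<^sup>+t. ennreal (h t) * indicator {0..T} t \<partial>lebesgue)"
  have actI: "action b \<sigma> T x \<psi> = 1/2 * I" using adm by (simp add: action_def h_def I_def f_def)
  have x0: "\<psi> 0 = x" using adm by (simp add: admissible_def)
  have "I < top"
  proof -
    have "1/2 * I < top" using act actI by (metis ennreal_less_top order.strict_trans)
    then show ?thesis by (auto simp add: ennreal_divide_eq_top_iff ennreal_mult_less_top)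
  qed
  then obtain i where i: "I = ennreal i" "i \<ge> 0" by (cases I) auto
  have ic: "i < 2*c"
  proof -
    have "ennreal (i/2) < ennreal c" using act actI i half_enn by simp
    then have "i/2 < c" using i by (subst (asm) ennreal_less_iff) auto
    then show ?thesis by simp
  qed
  define \<gamma> where "\<gamma> = min 1 ((2*c - i)/(2*(i+T+1)))"
  have g0: "\<gamma> > 0" "\<gamma> \<le> 1" using ic i T by (auto simp: \<gamma>_def)
  have gbound: "(1+\<gamma>)*i + \<gamma>*T < 2*c"
  proof -
    have "\<gamma> \<le> (2*c - i)/(2*(i+T+1))" by (simp add: \<gamma>_def)
    then have "\<gamma> * (2*(i+T+1)) \<le> 2*c - i" using i T by (simp add: le_divide_eq)
    note q1 = this
    have q2: "\<gamma>*(2*(i+T+1)) = 2*(\<gamma>*i) + 2*(T*\<gamma>) + 2*\<gamma>" by (simp add: algebra_simps)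
    have q3: "(1+\<gamma>)*i + \<gamma>*T = i + \<gamma>*i + T*\<gamma>" by (simp add: algebra_simps)
    have q4: "0 \<le> T*\<gamma>" "0 \<le> \<gamma>*i" using g0 i T by simp_all
    have q1': "2*(\<gamma>*i) + 2*(T*\<gamma>) + 2*\<gamma> \<le> 2*c - i" using q1 unfolding q2 .
    show ?thesis unfolding q3 using q1' q4 g0 by linarith
  qed
  obtain R where R: "\<forall>t\<in>{0..T}. norm (\<psi> t) \<le> R"
  proof -
    have "compact (\<psi> ` {0..T})" using c\<psi> compact_Icc by (rule compact_continuous_image)
    then have "bounded (\<psi> ` {0..T})" by (rule compact_imp_bounded)
    then obtain R where "\<forall>z\<in>\<psi> ` {0..T}. norm z \<le> R" by (auto simp: bounded_iff)
    then show ?thesis using that by auto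
  qed
  define K where "K = cball (0::R2) (R+1)"
  have Kc: "compact K" by (simp add: K_def)
  have \<psi>K: "\<psi> t \<in> K" if "t \<in> {0..T}" for t
  proof -
    have "norm (\<psi> t) \<le> R" using R that by blast
    then show ?thesis by (simp add: K_def)
  qed
  have Kne: "K \<noteq> {}" using \<psi>K[of 0] T by auto
  obtain z0 where z0: "z0 \<in> K" "\<forall>z\<in>K. \<bar>\<sigma> z0\<bar> \<le> \<bar>\<sigma> z\<bar>"
  proof -
    have "continuous_on K (\<lambda>z. \<bar>\<sigma> z\<bar>)"
      by (intro continuous_on_rabs continuous_on_subset[OF sc]) auto
    then show ?thesis using continuous_attains_inf[OF Kc Kne] that by blast
  qed
  define m where "m = \<bar>\<sigma> z0\<bar>"
  have m0: "m > 0" using snz[rule_format, of z0] by (simp add: m_def)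
  have mK: "m \<le> \<bar>\<sigma> z\<bar>" if "z \<in> K" for z using z0 that by (simp add: m_def)
  have ucs: "uniformly_continuous_on K \<sigma>"
    by (rule compact_uniformly_continuous[OF continuous_on_subset[OF sc] Kc]) auto
  have ucb: "uniformly_continuous_on K b"
    by (rule compact_uniformly_continuous[OF continuous_on_subset[OF bc] Kc]) auto
  have gm: "\<gamma>*m/8 > 0" "\<gamma>*m/16 > 0" using g0 m0 by auto
  obtain \<rho>1 where \<rho>1: "\<rho>1 > 0" "\<forall>z\<in>K. \<forall>z'\<in>K. dist z' z < \<rho>1 \<longrightarrow> dist (\<sigma> z') (\<sigma> z) < \<gamma>*m/8"
    using ucs gm(1) unfolding uniformly_continuous_on_def by blast
  obtain \<rho>2 where \<rho>2: "\<rho>2 > 0" "\<forall>z\<in>K. \<forall>z'\<in>K. dist z' z < \<rho>2 \<longrightarrow> dist (b z') (b z) < \<gamma>*m/16"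
    using ucb gm(2) unfolding uniformly_continuous_on_def by blast
  define \<epsilon>0 where "\<epsilon>0 = min (min (min \<rho>1 \<rho>2) 1 / 4) (\<gamma>*m/16)"
  have e0: "\<epsilon>0 > 0" using \<rho>1 \<rho>2 gm by (simp add: \<epsilon>0_def)
  have KT: "KK T > 0" using T by (rule KK_pos)
  define r where "r = \<epsilon>0 / KK T"
  have r0: "r > 0" using e0 KT by (simp add: r_def)
  have Kr: "KK T * r = \<epsilon>0" using KT by (simp add: r_def)
  show ?thesis
  proof (intro exI[of _ r] conjI allI impI r0)
    fix x' y' :: R2
    assume dx: "dist x' x < r" and dy: "dist y' y < r"
    define d where "d = x' - x"
    define e where "e = y' - y"
    have nd: "norm d \<le> r" and ne: "norm e \<le> r" using dx dy by (simp_all add: d_def e_def dist_norm)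
    have cb: "\<bar>cub T d e t\<bar> \<le> \<epsilon>0" "\<bar>cub1 T d e t\<bar> \<le> \<epsilon>0" "\<bar>cub2 T d e t\<bar> \<le> \<epsilon>0"
      if "t \<in> {0..T}" for t using cub_bounds[OF T nd ne that] Kr by simp_all
    define \<psi>' where "\<psi>' = (\<lambda>t. (fst (\<psi> t) + cub T d e t, snd (\<psi> t) + cub1 T d e t))"
    have c\<psi>': "continuous_on {0..T} \<psi>'"
      unfolding \<psi>'_def cub_def cub1_def
      by (intro continuous_intros continuous_on_fst continuous_on_snd c\<psi>)
    have \<psi>'0: "\<psi>' 0 = x'" using x0 by (simp add: \<psi>'_def d_def)
    have \<psi>'T: "\<psi>' T = y'" using yT T by (simp add: \<psi>'_def e_def cub_T cub1_T)
    show "\<exists>\<psi>'. continuous_on {0..T} \<psi>' \<and> \<psi>' 0 = x' \<and> \<psi>' T = y' \<and> action b \<sigma> T x' \<psi>' < ennreal c"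
    proof (intro exI[of _ \<psi>'] conjI c\<psi>' \<psi>'0 \<psi>'T)
      define L where "L = 2*\<bar>cc2 T d e\<bar> + 6*\<bar>cc3 T d e\<bar>*T"
      have adm': "admissible T x' \<psi>'"
        unfolding admissible_def
      proof (intro conjI ballI \<psi>'0)
        fix t assume t: "t \<in> {0..T}"
        have "((\<lambda>s. fst (\<psi> s)) has_real_derivative snd (\<psi> t)) (at t within {0..T})"
          using adm t by (simp add: admissible_def)
        then show "((\<lambda>s. fst (\<psi>' s)) has_real_derivative snd (\<psi>' t)) (at t within {0..T})"
          unfolding \<psi>'_def fst_conv snd_conv by (rule DERIV_add[OF _ cub_deriv])
      next
        show "continuous_on {0..T} (\<lambda>s. snd (\<psi>' s))" using c\<psi>' by (intro continuous_on_snd)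
      next
        have "abs_cont_on (\<lambda>s. snd (\<psi> s)) {0..T}" using adm by (simp add: admissible_def)
        moreover have "abs_cont_on (cub1 T d e) {0..T}"
        proof (rule abs_cont_lip[of L])
          show "0 \<le> L" using T by (simp add: L_def)
          fix a b assume "a \<in> {0..T}" "b \<in> {0..T}"
          then show "\<bar>cub1 T d e b - cub1 T d e a\<bar> \<le> L * \<bar>b - a\<bar>" unfolding L_def by (rule cub1_lip)
        qed
        ultimately have "abs_cont_on (\<lambda>s. snd (\<psi> s) + cub1 T d e s) {0..T}" by (rule abs_cont_add)
        then show "abs_cont_on (\<lambda>s. snd (\<psi>' s)) {0..T}" by (simp add: \<psi>'_def)
      qed
      define f' where "f' = (\<lambda>s. snd (\<psi> s) + cub1 T d e s)"
      define h' where "h' = (\<lambda>t. (\<bar>(deriv f' t - b (\<psi>' t)) / \<sigma> (\<psi>' t)\<bar>)\<^sup>2)"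
      define I' where "I' = (\<integral>\<^sup>+t. ennreal (h' t) * indicator {0..T} t \<partial>lebesgue)"
      have actI': "action b \<sigma> T x' \<psi>' = 1/2 * I'"
        using adm' by (simp add: action_def h'_def I'_def f'_def \<psi>'_def)
      have pw: "h' t \<le> (1+\<gamma>) * h t + \<gamma>" if t: "t \<in> {0..T}" for t
      proof -
        define q where "q = (if f differentiable (at t) then cub2 T d e t else 0)"
        have dq: "deriv f' t = deriv f t + q"
          using deriv_add_smooth[OF cub1_deriv, of f] unfolding f'_def q_def by (simp add: f_def)
        have qb: "\<bar>q\<bar> \<le> \<gamma>*m/16" using cb(3)[OF t] by (auto simp: q_def \<epsilon>0_def)
        have dd: "dist (\<psi>' t) (\<psi> t) \<le> \<bar>cub T d e t\<bar> + \<bar>cub1 T d e t\<bar>"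
        proof -
          have "\<psi>' t - \<psi> t = (cub T d e t, cub1 T d e t)" by (cases "\<psi> t") (simp add: \<psi>'_def)
          then show ?thesis using norm_Pair_le[of "cub T d e t" "cub1 T d e t"] by (simp add: dist_norm)
        qed
        have d2: "dist (\<psi>' t) (\<psi> t) \<le> 2*\<epsilon>0" using dd cb(1,2)[OF t] by linarith
        have d3: "2*\<epsilon>0 < min \<rho>1 \<rho>2" "2*\<epsilon>0 \<le> 1" using e0 by (auto simp: \<epsilon>0_def)
        have \<psi>'K: "\<psi>' t \<in> K"
        proof -
          have "norm (\<psi>' t) \<le> norm (\<psi> t) + dist (\<psi>' t) (\<psi> t)"
            by (metis dist_norm norm_triangle_sub add.commute)
          then show ?thesis using R t d2 d3 by (fastforce simp: K_def)
        qed
        have s1: "\<bar>\<sigma> (\<psi>' t) - \<sigma> (\<psi> t)\<bar> < \<gamma>*m/8"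
          using \<rho>1(2) \<psi>K[OF t] \<psi>'K d2 d3 by (auto simp: dist_real_def)
        have b1: "\<bar>b (\<psi>' t) - b (\<psi> t)\<bar> < \<gamma>*m/16"
          using \<rho>2(2) \<psi>K[OF t] \<psi>'K d2 d3 by (auto simp: dist_real_def)
        have ms: "m \<le> \<bar>\<sigma> (\<psi>' t)\<bar>" using mK[OF \<psi>'K] .
        have hs: "\<bar>\<sigma> (\<psi> t) - \<sigma> (\<psi>' t)\<bar> \<le> \<gamma>/8 * \<bar>\<sigma> (\<psi>' t)\<bar>"
        proof -
          have "\<gamma>*m/8 \<le> \<gamma>/8 * \<bar>\<sigma> (\<psi>' t)\<bar>" using ms g0 by (simp add: mult_left_mono)
          then show ?thesis using s1 by linarith
        qed
        have hw: "\<bar>q + b (\<psi> t) - b (\<psi>' t)\<bar> \<le> \<gamma>/8 * \<bar>\<sigma> (\<psi>' t)\<bar>"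
        proof -
          have "\<gamma>*m/8 \<le> \<gamma>/8 * \<bar>\<sigma> (\<psi>' t)\<bar>" using ms g0 by (simp add: mult_left_mono)
          then show ?thesis using qb b1 by linarith
        qed
        have "((deriv f t + q - b (\<psi>' t)) / \<sigma> (\<psi>' t))^2 \<le> (1+\<gamma>) * ((deriv f t - b (\<psi> t)) / \<sigma> (\<psi> t))^2 + \<gamma>"
          by (rule key_ineq[OF g0 _ _ hs hw]) (use snz in blast)+
        moreover have "h' t = ((deriv f t + q - b (\<psi>' t)) / \<sigma> (\<psi>' t))^2" unfolding h'_def dq by (rule power2_abs)
        moreover have "h t = ((deriv f t - b (\<psi> t)) / \<sigma> (\<psi> t))^2" unfolding h_def by (rule power2_abs)
        ultimately show ?thesis by simp
      qed
      have pwe: "ennreal (h' t) * indicator {0..T} t \<le> ennreal (1+\<gamma>) * (ennreal (h t) * indicator {0..T} t) + ennreal \<gamma> * indicator {0..T} t" for t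
      proof (cases "t \<in> {0..T}")
        case True
        have "ennreal (h' t) \<le> ennreal ((1+\<gamma>) * h t + \<gamma>)" using pw[OF True] by (rule ennreal_leI)
        also have "\<dots> = ennreal (1+\<gamma>) * ennreal (h t) + ennreal \<gamma>"
          using g0 by (simp add: ennreal_mult' h_def)
        finally show ?thesis using True by simp
      qed simp
      have "I' \<le> (\<integral>\<^sup>+t. ennreal (1+\<gamma>) * (ennreal (h t) * indicator {0..T} t) \<partial>lebesgue) + (\<integral>\<^sup>+t. ennreal \<gamma> * indicator {0..T} t \<partial>lebesgue)"
        unfolding I'_def by (rule nn_int_add_le[OF pwe ind_meas]) (simp add: ennreal_mult_less_top indicator_def)
      also have "\<dots> \<le> ennreal (1+\<gamma>) * I + ennreal \<gamma> * ennreal T"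
        using nn_int_cmult_le[where a="1+\<gamma>" and g="\<lambda>t. ennreal (h t) * indicator {0..T} t" and M=lebesgue] g0 T
        by (intro add_mono) (simp_all add: I_def int_ind)
      also have "\<dots> = ennreal ((1+\<gamma>)*i + \<gamma>*T)"
        using g0 i T by (simp add: ennreal_mult')
      finally have "I' \<le> ennreal ((1+\<gamma>)*i + \<gamma>*T)" .
      then have "action b \<sigma> T x' \<psi>' \<le> ennreal (((1+\<gamma>)*i + \<gamma>*T)/2)"
        unfolding actI' half_enn[symmetric] by (rule mult_left_mono) simp
      also have "\<dots> < ennreal c"
        using gbound g0 i T by (subst ennreal_less_iff) auto
      finally show "action b \<sigma> T x' \<psi>' < ennreal c" .
    qed
  qed
qed



lemma half_top: "(1/2::ennreal) < top"
proof -
  have "(1/2::ennreal) = ennreal (1/2)" using half_enn[of 1] by simp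
  also have "\<dots> < top" by (rule ennreal_less_top)
  finally show ?thesis .
qed

lemma path_exists:
  fixes b \<sigma> :: "R2 \<Rightarrow> real"
  assumes bc: "continuous_on UNIV b" and sc: "continuous_on UNIV \<sigma>" and snz: "\<forall>z. \<sigma> z \<noteq> 0" and T: "T > 0"
  shows "\<exists>\<psi>. continuous_on {0..T} \<psi> \<and> \<psi> 0 = x \<and> \<psi> T = y \<and> action b \<sigma> T x \<psi> < \<infinity>"
proof -
  define \<psi> where "\<psi> = (\<lambda>t. (cub T x y t, cub1 T x y t))"
  have c\<psi>: "continuous_on UNIV \<psi>" unfolding \<psi>_def cub_def cub1_def by (intro continuous_intros)
  have \<psi>0: "\<psi> 0 = x" by (simp add: \<psi>_def)
  have \<psi>T: "\<psi> T = y" using T by (simp add: \<psi>_def cub_T cub1_T)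
  define L where "L = 2*\<bar>cc2 T x y\<bar> + 6*\<bar>cc3 T x y\<bar>*T"
  have adm: "admissible T x \<psi>"
    unfolding admissible_def
  proof (intro conjI ballI \<psi>0)
    fix t show "((\<lambda>s. fst (\<psi> s)) has_real_derivative snd (\<psi> t)) (at t within {0..T})"
      unfolding \<psi>_def fst_conv snd_conv by (rule cub_deriv)
  next
    show "continuous_on {0..T} (\<lambda>s. snd (\<psi> s))" unfolding \<psi>_def snd_conv cub1_def by (intro continuous_intros)
  next
    have "abs_cont_on (cub1 T x y) {0..T}"
    proof (rule abs_cont_lip[of L])
      show "0 \<le> L" using T by (simp add: L_def)
      fix a b assume "a \<in> {0..T}" "b \<in> {0..T}"
      then show "\<bar>cub1 T x y b - cub1 T x y a\<bar> \<le> L * \<bar>b - a\<bar>" unfolding L_def by (rule cub1_lip)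
    qed
    then show "abs_cont_on (\<lambda>s. snd (\<psi> s)) {0..T}" by (simp add: \<psi>_def)
  qed
  define h where "h = (\<lambda>t. (\<bar>(cub2 T x y t - b (\<psi> t)) / \<sigma> (\<psi> t)\<bar>)\<^sup>2)"
  have dv: "deriv (\<lambda>s. snd (\<psi> s)) t = cub2 T x y t" for t
    unfolding \<psi>_def snd_conv by (rule DERIV_imp_deriv[OF cub1_deriv])
  have act: "action b \<sigma> T x \<psi> = 1/2 * (\<integral>\<^sup>+t. ennreal (h t) * indicator {0..T} t \<partial>lebesgue)"
    using adm by (simp add: action_def h_def dv)
  have ch: "continuous_on {0..T} h"
  proof -
    have "continuous_on {0..T} (\<lambda>t. b (\<psi> t))"
      by (rule continuous_on_compose2[OF bc continuous_on_subset[OF c\<psi>]]) auto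
    moreover have "continuous_on {0..T} (\<lambda>t. \<sigma> (\<psi> t))"
      by (rule continuous_on_compose2[OF sc continuous_on_subset[OF c\<psi>]]) auto
    moreover have "continuous_on {0..T} (cub2 T x y)" unfolding cub2_def by (intro continuous_intros)
    ultimately show ?thesis unfolding h_def
      using snz[rule_format] by (intro continuous_intros) auto
  qed
  obtain B where B: "\<forall>t\<in>{0..T}. h t \<le> B"
  proof -
    have "compact (h ` {0..T})" using ch compact_Icc by (rule compact_continuous_image)
    then have "bounded (h ` {0..T})" by (rule compact_imp_bounded)
    then obtain B where B: "\<forall>z\<in>h ` {0..T}. norm z \<le> B" by (auto simp: bounded_iff)
    have "\<forall>t\<in>{0..T}. h t \<le> B"
    proof
      fix t assume "t \<in> {0..T}"
      then have "norm (h t) \<le> B" using B by blast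
      then show "h t \<le> B" by simp
    qed
    then show ?thesis by (rule that)
  qed
  have "(\<integral>\<^sup>+t. ennreal (h t) * indicator {0..T} t \<partial>lebesgue) \<le> (\<integral>\<^sup>+t. ennreal B * indicator {0..T} t \<partial>lebesgue)"
    by (rule nn_integral_mono) (use B in \<open>auto simp: indicator_def intro: ennreal_leI\<close>)
  also have "\<dots> < \<infinity>" by (simp add: int_ind ennreal_mult_less_top)
  finally have "action b \<sigma> T x \<psi> < \<infinity>" unfolding act using half_top by (simp add: ennreal_mult_less_top)
  then show ?thesis using c\<psi> \<psi>0 \<psi>T by (intro exI[of _ \<psi>]) (auto intro: continuous_on_subset)
qed

lemma qp_le:
  assumes "T > 0" "continuous_on {0..T} \<psi>" "\<psi> 0 = x" "\<psi> T = y"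
  shows "quasipot b \<sigma> x y \<le> action b \<sigma> T x \<psi>"
  unfolding quasipot_def by (rule INF_lower2[where i="(T,\<psi>)"]) (use assms in auto)

lemma qp_lt:
  assumes "quasipot b \<sigma> x y < c"
  shows "\<exists>T \<psi>. T > 0 \<and> continuous_on {0..T} \<psi> \<and> \<psi> 0 = x \<and> \<psi> T = y \<and> action b \<sigma> T x \<psi> < c"
  using assms unfolding quasipot_def by (subst (asm) INF_less_iff) auto

lemma usc:
  fixes b \<sigma> :: "R2 \<Rightarrow> real"
  assumes bc: "continuous_on UNIV b" and sc: "continuous_on UNIV \<sigma>" and snz: "\<forall>z. \<sigma> z \<noteq> 0"
    and q: "quasipot b \<sigma> x y < ennreal c"
  shows "\<exists>r>0. \<forall>x' y'. dist x' x < r \<longrightarrow> dist y' y < r \<longrightarrow> quasipot b \<sigma> x' y' < ennreal c"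
proof -
  obtain T \<psi> where T: "T > 0" "continuous_on {0..T} \<psi>" "\<psi> 0 = x" "\<psi> T = y" "action b \<sigma> T x \<psi> < ennreal c"
    using qp_lt[OF q] by blast
  have adm: "admissible T x \<psi>"
  proof (rule ccontr)
    assume "\<not> admissible T x \<psi>"
    then have "action b \<sigma> T x \<psi> = \<infinity>" by (simp add: action_def)
    then show False using T(5) by simp
  qed
  obtain r where r: "r > 0" "\<forall>x' y'. dist x' x < r \<longrightarrow> dist y' y < r \<longrightarrow>
           (\<exists>\<psi>'. continuous_on {0..T} \<psi>' \<and> \<psi>' 0 = x' \<and> \<psi>' T = y' \<and> action b \<sigma> T x' \<psi>' < ennreal c)"
    using pert[OF bc sc snz T(1,2) adm T(4,5)] by blast
  show ?thesis
  proof (intro exI[of _ r] conjI allI impI r(1))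
    fix x' y' assume "dist x' x < r" "dist y' y < r"
    then obtain \<psi>' where "continuous_on {0..T} \<psi>'" "\<psi>' 0 = x'" "\<psi>' T = y'" "action b \<sigma> T x' \<psi>' < ennreal c"
      using r(2) by blast
    then show "quasipot b \<sigma> x' y' < ennreal c" using qp_le[OF T(1)] by (meson le_less_trans)
  qed
qed

lemma qp_eq0:
  fixes b \<sigma> :: "R2 \<Rightarrow> real"
  assumes "b (e1, 0) = 0"
  shows "quasipot b \<sigma> (e1, 0) (e1, 0) = 0"
proof -
  define \<psi> where "\<psi> = (\<lambda>t::real. (e1, 0::real))"
  have adm: "admissible 1 (e1, 0) \<psi>"
    unfolding admissible_def \<psi>_def
    by (auto intro: abs_cont_lip[of 0] DERIV_const)
  have d: "deriv (\<lambda>s. snd (\<psi> s)) t = 0" for t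
    unfolding \<psi>_def by simp
  have "action b \<sigma> 1 (e1, 0) \<psi> = 0"
    using adm assms by (simp add: action_def d) (simp add: \<psi>_def)
  moreover have "quasipot b \<sigma> (e1, 0) (e1, 0) \<le> action b \<sigma> 1 (e1, 0) \<psi>"
    by (rule qp_le) (auto simp: \<psi>_def)
  ultimately show ?thesis by simp
qed



lemma qp_fin:
  fixes b \<sigma> :: "R2 \<Rightarrow> real"
  assumes bc: "continuous_on UNIV b" and sc: "continuous_on UNIV \<sigma>" and snz: "\<forall>z. \<sigma> z \<noteq> 0"
  shows "quasipot b \<sigma> x y < \<infinity>"
proof -
  obtain \<psi> where p: "continuous_on {0..1} \<psi>" "\<psi> 0 = x" "\<psi> 1 = y" "action b \<sigma> 1 x \<psi> < \<infinity>"
    using path_exists[OF bc sc snz, of 1 x y] by auto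
  have "quasipot b \<sigma> x y \<le> action b \<sigma> 1 x \<psi>" by (rule qp_le) (use p in auto)
  then show ?thesis using p(4) by (rule le_less_trans)
qed

lemma part2:
  fixes b \<sigma> :: "R2 \<Rightarrow> real"
  assumes bc: "continuous_on UNIV b" and sc: "continuous_on UNIV \<sigma>" and snz: "\<forall>z. \<sigma> z \<noteq> 0"
  shows "\<exists>L. ((\<lambda>\<delta>. SUP p \<in> ball (x, y) \<delta> - {(x, y)}. quasipot b \<sigma> (fst p) (snd p)) \<longlongrightarrow> L) (at_right 0)
                  \<and> L \<le> quasipot b \<sigma> x y"
proof -
  define S where "S = (\<lambda>\<delta>::real. SUP p \<in> ball (x, y) \<delta> - {(x, y)}. quasipot b \<sigma> (fst p) (snd p))"
  define L where "L = (INF \<delta>\<in>{0<..}. S \<delta>)"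
  have mono: "S d1 \<le> S d2" if "d1 \<le> d2" for d1 d2
    unfolding S_def by (rule SUP_subset_mono) (use that in auto)
  have lim: "(S \<longlongrightarrow> L) (at_right 0)"
    unfolding order_tendsto_iff
  proof (intro conjI allI impI)
    fix a assume a: "a < L"
    show "\<forall>\<^sub>F \<delta> in at_right 0. a < S \<delta>"
      unfolding eventually_at_right_field
    proof (intro exI[of _ 1] conjI allI impI)
      fix d :: real assume "d > 0"
      then have "L \<le> S d" unfolding L_def by (intro INF_lower) auto
      then show "a < S d" using a by simp
    qed simp
  next
    fix a assume a: "L < a"
    then obtain d0 where d0: "d0 > 0" "S d0 < a" unfolding L_def by (auto simp: INF_less_iff)
    show "\<forall>\<^sub>F \<delta> in at_right 0. S \<delta> < a"
      unfolding eventually_at_right_field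
    proof (intro exI[of _ d0] conjI allI impI d0(1))
      fix d :: real assume "0 < d" "d < d0"
      then show "S d < a" using mono[of d d0] d0 by simp
    qed
  qed
  have "L \<le> quasipot b \<sigma> x y"
  proof (rule ccontr)
    assume "\<not> L \<le> quasipot b \<sigma> x y"
    then have "quasipot b \<sigma> x y < L" by simp
    then obtain z where z: "quasipot b \<sigma> x y < z" "z < L" using dense by blast
    then have "z < top" using top.extremum_strict[of L] by (metis less_le_trans top_greatest)
    then obtain c where zc: "z = ennreal c" by (cases z) auto
    obtain r where r: "r > 0" "\<forall>x' y'. dist x' x < r \<longrightarrow> dist y' y < r \<longrightarrow> quasipot b \<sigma> x' y' < ennreal c"
      using usc[OF bc sc snz, of x y c] z(1) zc by blast
    have "S r \<le> z"
      unfolding S_def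
    proof (rule SUP_least)
      fix p assume "p \<in> ball (x, y) r - {(x, y)}"
      then have dp: "dist p (x, y) < r" by (simp add: dist_commute)
      have "dist (fst p) x < r" using dist_fst_le[of p "(x,y)"] dp by simp
      moreover have "dist (snd p) y < r" using dist_snd_le[of p "(x,y)"] dp by simp
      ultimately have "quasipot b \<sigma> (fst p) (snd p) < ennreal c" using r(2) by blast
      then show "quasipot b \<sigma> (fst p) (snd p) \<le> z" using zc by simp
    qed
    moreover have "L \<le> S r" unfolding L_def using r(1) by (intro INF_lower) auto
    ultimately show False using z(2) by simp
  qed
  then show ?thesis using lim unfolding S_def by blast
qed

lemma part_cont:
  fixes b \<sigma> :: "R2 \<Rightarrow> real"
  assumes bc: "continuous_on UNIV b" and sc: "continuous_on UNIV \<sigma>" and snz: "\<forall>z. \<sigma> z \<noteq> 0"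
    and e: "b (e1, 0) = 0"
  shows "isCont (\<lambda>p. quasipot b \<sigma> (fst p) (snd p)) ((e1, 0), (e1, 0))"
proof -
  define F where "F = (\<lambda>p. quasipot b \<sigma> (fst p) (snd p))"
  have F0: "F ((e1, 0), (e1, 0)) = 0" using qp_eq0[of b e1 \<sigma>, OF e] by (simp add: F_def)
  have "(F \<longlongrightarrow> 0) (at ((e1, 0), (e1, 0)))"
    unfolding order_tendsto_iff
  proof (intro conjI allI impI)
    fix a :: ennreal assume "a < 0" then show "\<forall>\<^sub>F p in at ((e1, 0), (e1, 0)). a < F p" by simp
  next
    fix a :: ennreal assume a: "0 < a"
    show "\<forall>\<^sub>F p in at ((e1, 0), (e1, 0)). F p < a"
    proof (cases a)
      case (real c)
      have "quasipot b \<sigma> (e1, 0) (e1, 0) < ennreal c" using qp_eq0[of b e1 \<sigma>, OF e] a real by simp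
      then obtain r where r: "r > 0" "\<forall>x' y'. dist x' (e1,0) < r \<longrightarrow> dist y' (e1,0) < r \<longrightarrow> quasipot b \<sigma> x' y' < ennreal c"
        using usc[OF bc sc snz] by blast
      show ?thesis
        unfolding eventually_at
      proof (intro exI[of _ r] conjI ballI impI r(1))
        fix p :: "R2 \<times> R2" assume "p \<in> UNIV" "p \<noteq> ((e1, 0), (e1, 0)) \<and> dist p ((e1, 0), (e1, 0)) < r"
        then have dp: "dist p ((e1, 0), (e1, 0)) < r" by simp
        have "dist (fst p) (e1,0) < r" using dist_fst_le[of p "((e1, 0), (e1, 0))"] dp by simp
        moreover have "dist (snd p) (e1,0) < r" using dist_snd_le[of p "((e1, 0), (e1, 0))"] dp by simp
        ultimately have "quasipot b \<sigma> (fst p) (snd p) < ennreal c" using r(2) by blast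
        then show "F p < a" using real by (simp add: F_def)
      qed
    next
      case top
      show ?thesis using qp_fin[OF bc sc snz] top by (simp add: F_def)
    qed
  qed
  then show ?thesis unfolding continuous_at F0[symmetric] F_def .
qed



lemma part3:
  fixes b \<sigma> :: "R2 \<Rightarrow> real"
  assumes bc: "continuous_on UNIV b" and sc: "continuous_on UNIV \<sigma>" and snz: "\<forall>z. \<sigma> z \<noteq> 0"
    and \<delta>: "\<delta> > 0" and \<eta>: "\<eta> > 0" and hyp: "\<forall>x\<in>cball x0 \<delta>. quasipot b \<sigma> x y0 < ennreal \<eta>"
  shows "\<exists>T0>0. \<forall>x\<in>cball x0 \<delta>. \<exists>Tx\<in>{0<..T0}. \<exists>\<psi>.
              continuous_on {0..Tx} \<psi> \<and> \<psi> 0 = x \<and> \<psi> Tx = y0 \<and>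
              action b \<sigma> Tx x \<psi> < ennreal \<eta>"
proof -
  define P where "P = (\<lambda>(x::R2) (Tr::real \<times> real). fst Tr > 0 \<and> snd Tr > 0 \<and>
     (\<forall>x'. dist x' x < snd Tr \<longrightarrow> (\<exists>\<psi>. continuous_on {0..fst Tr} \<psi> \<and> \<psi> 0 = x' \<and> \<psi> (fst Tr) = y0 \<and>
          action b \<sigma> (fst Tr) x' \<psi> < ennreal \<eta>)))"
  have ex: "\<forall>x\<in>cball x0 \<delta>. \<exists>Tr. P x Tr"
  proof
    fix x assume "x \<in> cball x0 \<delta>"
    then have q: "quasipot b \<sigma> x y0 < ennreal \<eta>" using hyp by blast
    obtain T \<psi> where T: "T > 0" "continuous_on {0..T} \<psi>" "\<psi> 0 = x" "\<psi> T = y0" "action b \<sigma> T x \<psi> < ennreal \<eta>"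
      using qp_lt[OF q] by blast
    have adm: "admissible T x \<psi>"
    proof (rule ccontr)
      assume "\<not> admissible T x \<psi>"
      then have "action b \<sigma> T x \<psi> = \<infinity>" by (simp add: action_def)
      then show False using T(5) by simp
    qed
    obtain r where r: "r > 0" "\<forall>x' y'. dist x' x < r \<longrightarrow> dist y' y0 < r \<longrightarrow>
           (\<exists>\<psi>'. continuous_on {0..T} \<psi>' \<and> \<psi>' 0 = x' \<and> \<psi>' T = y' \<and> action b \<sigma> T x' \<psi>' < ennreal \<eta>)"
      using pert[OF bc sc snz T(1,2) adm T(4,5)] by blast
    have "P x (T, r)"
      unfolding P_def
    proof (simp only: split_beta fst_conv snd_conv, intro conjI allI impI T(1) r(1))
      fix x' :: R2 assume "dist x' x < r"
      moreover have "dist y0 y0 < r" using r(1) by simp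
      ultimately show "\<exists>\<psi>. continuous_on {0..T} \<psi> \<and> \<psi> 0 = x' \<and> \<psi> T = y0 \<and> action b \<sigma> T x' \<psi> < ennreal \<eta>"
        using r(2) by blast
    qed
    then show "\<exists>Tr. P x Tr" by blast
  qed
  then obtain F where F: "\<forall>x\<in>cball x0 \<delta>. P x (F x)" by (metis bchoice)
  have cover: "cball x0 \<delta> \<subseteq> (\<Union>c\<in>cball x0 \<delta>. ball c (snd (F c)))"
  proof
    fix x assume x: "x \<in> cball x0 \<delta>"
    then have "snd (F x) > 0" using F unfolding P_def by auto
    then have "x \<in> ball x (snd (F x))" by simp
    then show "x \<in> (\<Union>c\<in>cball x0 \<delta>. ball c (snd (F c)))" using x by blast
  qed
  obtain J where J: "J \<subseteq> cball x0 \<delta>" "finite J" "cball x0 \<delta> \<subseteq> (\<Union>c\<in>J. ball c (snd (F c)))"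
    using compactE_image[OF compact_cball, of "cball x0 \<delta>" "\<lambda>c. ball c (snd (F c))", OF _ cover] by auto
  define T0 where "T0 = Max (insert 1 ((\<lambda>c. fst (F c)) ` J))"
  have T0: "T0 \<ge> 1" unfolding T0_def using J(2) by simp
  show ?thesis
  proof (intro exI[of _ T0] conjI ballI)
    show "T0 > 0" using T0 by simp
    fix x assume x: "x \<in> cball x0 \<delta>"
    then obtain c where c: "c \<in> J" "x \<in> ball c (snd (F c))" using J(3) by blast
    have Pc: "P c (F c)" using F J(1) c(1) by blast
    have dx: "dist x c < snd (F c)" using c(2) by (simp add: dist_commute)
    have le: "fst (F c) \<le> T0" unfolding T0_def using J(2) c(1) by (intro Max_ge) auto
    obtain \<psi> where "continuous_on {0..fst (F c)} \<psi>" "\<psi> 0 = x" "\<psi> (fst (F c)) = y0"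
        "action b \<sigma> (fst (F c)) x \<psi> < ennreal \<eta>"
    proof -
      have "\<forall>x'. dist x' c < snd (F c) \<longrightarrow> (\<exists>\<psi>. continuous_on {0..fst (F c)} \<psi> \<and> \<psi> 0 = x' \<and> \<psi> (fst (F c)) = y0 \<and>
          action b \<sigma> (fst (F c)) x' \<psi> < ennreal \<eta>)" using Pc unfolding P_def by blast
      then show ?thesis using dx that by blast
    qed
    moreover have "fst (F c) \<in> {0<..T0}" using Pc le unfolding P_def by auto
    ultimately show "\<exists>Tx\<in>{0<..T0}. \<exists>\<psi>. continuous_on {0..Tx} \<psi> \<and> \<psi> 0 = x \<and> \<psi> Tx = y0 \<and>
              action b \<sigma> Tx x \<psi> < ennreal \<eta>" by blast
  qed
qed

theorem lemma3p2:
  fixes b \<sigma> :: "R2 \<Rightarrow> real"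
  assumes b_lip: "loc_lipschitz b"
    and \<sigma>_lip: "loc_lipschitz \<sigma>"
    and \<sigma>_nz: "\<forall>z. \<sigma> z \<noteq> 0"
  shows
    "(\<forall>x y (T::real). T > 0 \<longrightarrow>
        (\<exists>\<psi>. continuous_on {0..T} \<psi> \<and> \<psi> 0 = x \<and> \<psi> T = y \<and> action b \<sigma> T x \<psi> < \<infinity>))
     \<and> (\<forall>x y. quasipot b \<sigma> x y < \<infinity>)
     \<and> (\<forall>x y. \<exists>L. ((\<lambda>\<delta>. SUP p \<in> ball (x, y) \<delta> - {(x, y)}. quasipot b \<sigma> (fst p) (snd p))
                        \<longlongrightarrow> L) (at_right 0)
                  \<and> L \<le> quasipot b \<sigma> x y)
     \<and> (\<forall>e1. b (e1, 0) = 0 \<longrightarrow>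
          isCont (\<lambda>p. quasipot b \<sigma> (fst p) (snd p)) ((e1, 0), (e1, 0)))
     \<and> (\<forall>x0 y0 (\<delta>::real) (\<eta>::real). \<delta> > 0 \<longrightarrow> \<eta> > 0 \<longrightarrow>
          (\<forall>x\<in>cball x0 \<delta>. quasipot b \<sigma> x y0 < ennreal \<eta>) \<longrightarrow>
          (\<exists>T0>0. \<forall>x\<in>cball x0 \<delta>. \<exists>Tx\<in>{0<..T0}. \<exists>\<psi>.
              continuous_on {0..Tx} \<psi> \<and> \<psi> 0 = x \<and> \<psi> Tx = y0 \<and>
              action b \<sigma> Tx x \<psi> < ennreal \<eta>))"
proof -
  have bc: "continuous_on UNIV b" using b_lip by (rule loc_lip_cont)
  have sc: "continuous_on UNIV \<sigma>" using \<sigma>_lip by (rule loc_lip_cont)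
  show ?thesis
    using path_exists[OF bc sc \<sigma>_nz] qp_fin[OF bc sc \<sigma>_nz] part2[OF bc sc \<sigma>_nz]
      part_cont[OF bc sc \<sigma>_nz] part3[OF bc sc \<sigma>_nz]
    by blast
qed

end
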